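(* $R(B_2,B_9) \ge 22$; that is, there exists a graph on $21$ vertices containing no copy of $B_2$ whose complement contains no copy of $B_9$.
   Context: For graphs $G,H$, the Ramsey number $R(G,H)$ is the smallest integer $N$ such that every red/blue coloring of the edges of $K_N$ contains a red copy of $G$ (as a subgraph, not necessarily induced) or a blue copy of $H$. The book $B_k$ is the graph on $k+2$ vertices consisting of an edge $uv$ together with $k$ further vertices, each adjacent exactly to $u$ and $v$. *)

theory Defs
  imports Main
begin

definition simple_graph :: "('a \<Rightarrow> 'a \<Rightarrow> bool) \<Rightarrow> bool" where
  "simple_graph E \<longleftrightarrow> (\<forall>x y. E x y = E y x) \<and> (\<forall>x. \<not> E x x)"

definition contains_book :: "'a set \<Rightarrow> ('a \<Rightarrow> 'a \<Rightarrow> bool) \<Rightarrow> nat \<Rightarrow> bool" where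
  "contains_book V E k \<longleftrightarrow>
     (\<exists>u v W. u \<in> V \<and> v \<in> V \<and> u \<noteq> v \<and> E u v \<and>
        W \<subseteq> V - {u, v} \<and> finite W \<and> card W = k \<and> (\<forall>w\<in>W. E u w \<and> E v w))"

definition graph_complement :: "('a \<Rightarrow> 'a \<Rightarrow> bool) \<Rightarrow> 'a \<Rightarrow> 'a \<Rightarrow> bool" where
  "graph_complement E x y \<longleftrightarrow> x \<noteq> y \<and> \<not> E x y"

end

theory Submission
  imports Defs
begin

definition NBt :: "nat list list" where
  "NBt = [[1, 6, 7, 9, 13, 14, 15, 20], [0, 2, 3, 10, 12, 15, 16, 19], [1, 5, 6, 12, 13, 17, 18, 20], [1, 5, 6, 8, 9, 14, 16, 18], [5, 6, 9, 10, 12, 15, 16, 20], [2, 3, 4, 7, 13, 14, 15, 19], [0, 2, 3, 4, 7, 10, 11, 17], [0, 5, 6, 8, 12, 16, 18, 19], [3, 7, 10, 12, 13, 15, 17, 20], [0, 3, 4, 12, 13, 17, 18, 19], [1, 4, 6, 8, 13, 14, 19], [6, 12, 13, 14, 15, 16, 18, 19], [1, 2, 4, 7, 8, 9, 11, 14], [0, 2, 5, 8, 9, 10, 11, 16], [0, 3, 5, 10, 11, 12, 20], [0, 1, 4, 5, 8, 11, 17, 18], [1, 3, 4, 7, 11, 13, 17, 20], [2, 6, 8, 9, 15, 16, 19], [2, 3, 7, 9, 11, 15, 20], [1, 5, 7, 9, 10, 11, 17, 20], [0, 2, 4, 8, 14, 16, 18, 19]]"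

definition MBt :: "nat list list" where
  "MBt = [[2, 3, 4, 5, 8, 10, 11, 12, 16, 17, 18, 19], [4, 5, 6, 7, 8, 9, 11, 13, 14, 17, 18, 20], [0, 3, 4, 7, 8, 9, 10, 11, 14, 15, 16, 19], [0, 2, 4, 7, 10, 11, 12, 13, 15, 17, 19, 20], [0, 1, 2, 3, 7, 8, 11, 13, 14, 17, 18, 19], [0, 1, 6, 8, 9, 10, 11, 12, 16, 17, 18, 20], [1, 5, 8, 9, 12, 13, 14, 15, 16, 18, 19, 20], [1, 2, 3, 4, 9, 10, 11, 13, 14, 15, 17, 20], [0, 1, 2, 4, 5, 6, 9, 11, 14, 16, 18, 19], [1, 2, 5, 6, 7, 8, 10, 11, 14, 15, 16, 20], [0, 2, 3, 5, 7, 9, 11, 12, 15, 16, 17, 18, 20], [0, 1, 2, 3, 4, 5, 7, 8, 9, 10, 17, 20], [0, 3, 5, 6, 10, 13, 15, 16, 17, 18, 19, 20], [1, 3, 4, 6, 7, 12, 14, 15, 17, 18, 19, 20], [1, 2, 4, 6, 7, 8, 9, 13, 15, 16, 17, 18, 19], [2, 3, 6, 7, 9, 10, 12, 13, 14, 16, 19, 20], [0, 2, 5, 6, 8, 9, 10, 12, 14, 15, 18, 19], [0, 1, 3, 4, 5, 7, 10, 11, 12, 13, 14, 18, 20], [0, 1, 4, 5, 6, 8, 10, 12, 13, 14, 16, 17, 19], [0, 2, 3, 4, 6, 8, 12, 13, 14, 15, 16, 18], [1, 3, 5, 6, 7, 9, 10, 11, 12, 13, 15, 17]]"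

definition NB :: "nat \<Rightarrow> nat list" where
  "NB u = (if u < 21 then NBt ! u else [])"

definition MB :: "nat \<Rightarrow> nat list" where
  "MB u = (if u < 21 then MBt ! u else [])"

definition G :: "nat \<Rightarrow> nat \<Rightarrow> bool" where
  "G x y \<longleftrightarrow> x < 21 \<and> y \<in> set (NB x)"

lemma C1: "\<forall>u\<in>set [0..<21]. \<forall>v\<in>set (NB u). length (filter (\<lambda>w. w \<in> set (NB v)) (NB u)) < 2"
  unfolding NB_def NBt_def by code_simp

lemma C2: "\<forall>u\<in>set [0..<21]. \<forall>v\<in>set (MB u). length (filter (\<lambda>w. w \<in> set (MB v)) (MB u)) < 9"
  unfolding MB_def MBt_def by code_simp

lemma Csym: "\<forall>u\<in>set [0..<21]. \<forall>v\<in>set (NB u). v < 21 \<and> u \<in> set (NB v)"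
  unfolding NB_def NBt_def by code_simp

lemma CM: "\<forall>u\<in>set [0..<21]. \<forall>w\<in>set [0..<21]. (w \<in> set (MB u)) = (w \<noteq> u \<and> w \<notin> set (NB u))"
  unfolding NB_def NBt_def MB_def MBt_def by code_simp

lemma Cirr: "\<forall>u\<in>set [0..<21]. u \<notin> set (NB u)"
  unfolding NB_def NBt_def by code_simp

lemma book_bound:
  assumes "contains_book V F k"
    and "\<And>u v. u \<in> V \<Longrightarrow> v \<in> V \<Longrightarrow> u \<noteq> v \<Longrightarrow> F u v \<Longrightarrow>
          \<exists>xs. (\<forall>w\<in>V - {u, v}. F u w \<and> F v w \<longrightarrow> w \<in> set xs) \<and> length xs < k"
  shows False
proof -
  from assms(1) obtain u v W where h: "u \<in> V" "v \<in> V" "u \<noteq> v" "F u v"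
    "W \<subseteq> V - {u, v}" "finite W" "card W = k" "\<forall>w\<in>W. F u w \<and> F v w"
    unfolding contains_book_def by blast
  from assms(2)[OF h(1-4)] obtain xs where
    xs: "\<forall>w\<in>V - {u, v}. F u w \<and> F v w \<longrightarrow> w \<in> set xs" "length xs < k" by blast
  have "W \<subseteq> set xs" using h(5,8) xs(1) by blast
  hence "card W \<le> card (set xs)" by (intro card_mono) auto
  also have "\<dots> \<le> length xs" by (rule card_length)
  finally show False using h(7) xs(2) by simp
qed

lemma in_range: "u \<in> {0..<21} \<Longrightarrow> u \<in> set [0..<(21::nat)]" by simp

theorem mainTheorem5:
  shows "\<exists>E :: nat \<Rightarrow> nat \<Rightarrow> bool. simple_graph E \<and>
           \<not> contains_book {0..<21} E 2 \<and>
           \<not> contains_book {0..<21} (graph_complement E) 9"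
proof (intro exI conjI)
  have irr: "\<And>x. \<not> G x x"
  proof
    fix x assume "G x x"
    hence x: "x < 21" "x \<in> set (NB x)" unfolding G_def by auto
    hence "x \<in> set [0..<21]" by simp
    have "x \<notin> set (NB x)" using bspec[OF Cirr \<open>x \<in> set [0..<21]\<close>] .
    with x show False by simp
  qed
  have sym: "\<And>x y. G x y \<Longrightarrow> G y x"
  proof -
    fix x y assume "G x y"
    hence "x \<in> set [0..<21]" "y \<in> set (NB x)" unfolding G_def by auto
    hence "y < 21 \<and> x \<in> set (NB y)" using Csym by (meson bspec)
    thus "G y x" unfolding G_def by simp
  qed
  show "simple_graph G"
    unfolding simple_graph_def using irr sym by blast
  show "\<not> contains_book {0..<21} G 2"
  proof
    assume "contains_book {0..<21} G 2"
    thus False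
    proof (rule book_bound)
      fix u v assume uv: "u \<in> {0..<21}" "v \<in> {0..<(21::nat)}" "u \<noteq> v" "G u v"
      have u: "u \<in> set [0..<21]" using uv(1) by simp
      have v: "v \<in> set (NB u)" using uv(4) unfolding G_def by simp
      show "\<exists>xs. (\<forall>w\<in>{0..<21} - {u, v}. G u w \<and> G v w \<longrightarrow> w \<in> set xs) \<and> length xs < 2"
      proof (intro exI conjI)
        show "\<forall>w\<in>{0..<21} - {u, v}. G u w \<and> G v w \<longrightarrow> w \<in> set (filter (\<lambda>w. w \<in> set (NB v)) (NB u))"
          unfolding G_def by auto
        show "length (filter (\<lambda>w. w \<in> set (NB v)) (NB u)) < 2"
          using bspec[OF bspec[OF C1 u] v] .
      qed
    qed
  qed
  show "\<not> contains_book {0..<21} (graph_complement G) 9"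
  proof
    assume "contains_book {0..<21} (graph_complement G) 9"
    thus False
    proof (rule book_bound)
      fix u v assume uv: "u \<in> {0..<21}" "v \<in> {0..<(21::nat)}" "u \<noteq> v" "graph_complement G u v"
      have u: "u \<in> set [0..<21]" using uv(1) by simp
      have v0: "v \<in> set [0..<21]" using uv(2) by simp
      have MBiff: "\<And>a b. a \<in> set [0..<21] \<Longrightarrow> b \<in> set [0..<21] \<Longrightarrow>
          (b \<in> set (MB a)) = (b \<noteq> a \<and> \<not> G a b)"
      proof -
        fix a b assume ab: "a \<in> set [0..<(21::nat)]" "b \<in> set [0..<(21::nat)]"
        have "(b \<in> set (MB a)) = (b \<noteq> a \<and> b \<notin> set (NB a))"
          using bspec[OF bspec[OF CM ab(1)] ab(2)] .
        moreover have "a < 21" using ab(1) by simp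
        ultimately show "(b \<in> set (MB a)) = (b \<noteq> a \<and> \<not> G a b)"
          unfolding G_def by simp
      qed
      have v: "v \<in> set (MB u)" using MBiff[OF u v0] uv(3,4) unfolding graph_complement_def by auto
      show "\<exists>xs. (\<forall>w\<in>{0..<21} - {u, v}. graph_complement G u w \<and> graph_complement G v w \<longrightarrow> w \<in> set xs) \<and> length xs < 9"
      proof (intro exI conjI)
        show "\<forall>w\<in>{0..<21} - {u, v}. graph_complement G u w \<and> graph_complement G v w \<longrightarrow> w \<in> set (filter (\<lambda>w. w \<in> set (MB v)) (MB u))"
        proof
          fix w assume w: "w \<in> {0..<21} - {u, v}"
          hence w0: "w \<in> set [0..<21]" by simp
          show "graph_complement G u w \<and> graph_complement G v w \<longrightarrow> w \<in> set (filter (\<lambda>w. w \<in> set (MB v)) (MB u))"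
            using MBiff[OF u w0] MBiff[OF v0 w0] unfolding graph_complement_def by auto
        qed
        show "length (filter (\<lambda>w. w \<in> set (MB v)) (MB u)) < 9"
          using bspec[OF bspec[OF C2 u] v] .
      qed
    qed
  qed
qed

end
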